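(* Let $\mathcal{F}$ be a $3$-uniform linear family with $S_{\mathcal{F}}=\emptyset$, let $\mathcal{M}$ be a maximum matching of $\mathcal{F}$, and let $\mathcal{M}_1=\{A_1,\ldots,A_m\}$, $\mathcal{M}_2$, $x_1,\ldots,x_m$ and $\mathcal{E}_2$ be as defined below. Then $\mathcal{E}_2=\emptyset$.
   Context: A family is a finite collection of distinct subsets of a vertex set; $3$-uniform means every member has exactly $3$ elements and linear means any two distinct members share at most one vertex. A matching is a collection of pairwise disjoint members; a maximum matching is one of largest size. $S_{\mathcal{F}}$ is the set of vertices covered by every maximum matching of $\mathcal{F}$. $\mathcal{F}_x=\{E\in\mathcal{F}:x\in E\}$; for a subfamily $\mathcal{N}$, $X_{\mathcal{N}}=\bigcup_{E\in\mathcal{N}}E$. $D_1(\mathcal{F})=\{E\in\mathcal{F}:|E\cap X_{\mathcal{M}}|=1\}$; for $A\in\mathcal{M}$, $D_1(A)=\{E\in D_1(\mathcal{F}):E\cap A\neq\emptyset\}$ and $d_1(A)=|D_1(A)|$. Let $\mathcal{M}_1=\{A\in\mathcal{M}: d_1(A)\geq 7\}=\{A_1,\ldots,A_m\}$ and $\mathcal{M}_2=\mathcal{M}\setminus\mathcal{M}_1$. For each $A_i\in\mathcal{M}_1$ all edges of $D_1(A_i)$ contain a common vertex of $A_i$ (such a vertex exists and is unique); call it $x_i$. Define $\mathcal{E}_1=\bigcup_{i=1}^m\mathcal{F}_{x_i}$ and $\mathcal{E}_2=\{E\in\mathcal{F}: E\cap B=\emptyset\text{ for all }B\in\mathcal{M}_2\}\setminus\mathcal{E}_1$.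 *)

theory Defs
  imports Main
begin

definition uniform3 :: "'a set set \<Rightarrow> bool" where
  "uniform3 F \<longleftrightarrow> (\<forall>E\<in>F. card E = 3)"

definition linear_family :: "'a set set \<Rightarrow> bool" where
  "linear_family F \<longleftrightarrow> (\<forall>E\<in>F. \<forall>E'\<in>F. E \<noteq> E' \<longrightarrow> card (E \<inter> E') \<le> 1)"

definition is_matching :: "'a set set \<Rightarrow> 'a set set \<Rightarrow> bool" where
  "is_matching F N \<longleftrightarrow> N \<subseteq> F \<and> (\<forall>E\<in>N. \<forall>E'\<in>N. E \<noteq> E' \<longrightarrow> E \<inter> E' = {})"

definition is_max_matching :: "'a set set \<Rightarrow> 'a set set \<Rightarrow> bool" where
  "is_max_matching F M \<longleftrightarrow> is_matching F M \<and> (\<forall>N. is_matching F N \<longrightarrow> card N \<le> card M)"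

definition S_fam :: "'a set set \<Rightarrow> 'a set" where
  "S_fam F = {v. \<forall>M. is_max_matching F M \<longrightarrow> v \<in> \<Union>M}"

definition star :: "'a set set \<Rightarrow> 'a \<Rightarrow> 'a set set" where
  "star F x = {E\<in>F. x \<in> E}"

definition D1 :: "'a set set \<Rightarrow> 'a set set \<Rightarrow> 'a set set" where
  "D1 F M = {E\<in>F. card (E \<inter> \<Union>M) = 1}"

definition D1A :: "'a set set \<Rightarrow> 'a set set \<Rightarrow> 'a set \<Rightarrow> 'a set set" where
  "D1A F M A = {E\<in>D1 F M. E \<inter> A \<noteq> {}}"

definition d1 :: "'a set set \<Rightarrow> 'a set set \<Rightarrow> 'a set \<Rightarrow> nat" where
  "d1 F M A = card (D1A F M A)"

definition M1 :: "'a set set \<Rightarrow> 'a set set \<Rightarrow> 'a set set" where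
  "M1 F M = {A\<in>M. d1 F M A \<ge> 7}"

definition M2 :: "'a set set \<Rightarrow> 'a set set \<Rightarrow> 'a set set" where
  "M2 F M = M - M1 F M"

definition center :: "'a set set \<Rightarrow> 'a set set \<Rightarrow> 'a set \<Rightarrow> 'a" where
  "center F M A = (THE x. x \<in> A \<and> (\<forall>E\<in>D1A F M A. x \<in> E))"

definition E1 :: "'a set set \<Rightarrow> 'a set set \<Rightarrow> 'a set set" where
  "E1 F M = (\<Union>A\<in>M1 F M. star F (center F M A))"

definition E2 :: "'a set set \<Rightarrow> 'a set set \<Rightarrow> 'a set set" where
  "E2 F M = {E\<in>F. \<forall>B\<in>M2 F M. E \<inter> B = {}} - E1 F M"

end

theory Submission
  imports Defs
begin

locale setting =
  fixes F M :: "'a set set"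
  assumes finF: "finite F"
    and uni: "uniform3 F"
    and lin: "linear_family F"
    and mm: "is_max_matching F M"
begin

lemma MF: "M \<subseteq> F" using mm unfolding is_max_matching_def is_matching_def by auto

lemma finM: "finite M" using MF finF finite_subset by blast

lemma Mdisj: "B \<in> M \<Longrightarrow> B' \<in> M \<Longrightarrow> B \<noteq> B' \<Longrightarrow> B \<inter> B' = {}"
  using mm unfolding is_max_matching_def is_matching_def by auto

lemma card3: "E \<in> F \<Longrightarrow> card E = 3" using uni unfolding uniform3_def by auto

lemma finE: "E \<in> F \<Longrightarrow> finite E" using card3 card.infinite by fastforce

lemma linear2:
  assumes "E \<in> F" "E' \<in> F" "x \<in> E" "x \<in> E'" "y \<in> E" "y \<in> E'" "x \<noteq> y"
  shows "E = E'"
proof (rule ccontr)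
  assume "E \<noteq> E'"
  then have "card (E \<inter> E') \<le> 1" using lin assms unfolding linear_family_def by auto
  moreover have "card {x,y} \<le> card (E \<inter> E')"
    using assms finE by (intro card_mono) auto
  ultimately show False using assms by auto
qed

lemma finX: "finite (\<Union>M)" using finM MF finE by auto

lemma augment:
  assumes T: "T \<subseteq> M" and GF: "G \<subseteq> F"
    and GX: "\<And>g. g \<in> G \<Longrightarrow> g \<inter> \<Union>M \<subseteq> \<Union>T"
    and Gd: "\<And>g g'. g \<in> G \<Longrightarrow> g' \<in> G \<Longrightarrow> g \<noteq> g' \<Longrightarrow> g \<inter> g' = {}"
    and GM: "G \<inter> M = {}"
    and cG: "card G > card T"
  shows False
proof -
  let ?N = "(M - T) \<union> G"
  have "is_matching F ?N"
    unfolding is_matching_def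
  proof (intro conjI ballI impI)
    show "?N \<subseteq> F" using MF GF by auto
  next
    fix B B' assume B: "B \<in> ?N" and B': "B' \<in> ?N" and ne: "B \<noteq> B'"
    have mix: "b \<inter> g = {}" if b: "b \<in> M - T" and g: "g \<in> G" for b g
    proof -
      have "b \<inter> g \<subseteq> b \<inter> \<Union>T" using GX[OF g] b by auto
      also have "\<dots> = {}"
      proof (rule ccontr)
        assume "b \<inter> \<Union>T \<noteq> {}"
        then obtain t where t: "t \<in> T" "b \<inter> t \<noteq> {}" by auto
        then have "b \<noteq> t" using b by auto
        then show False using Mdisj[of b t] t b T by auto
      qed
      finally show ?thesis by auto
    qed
    show "B \<inter> B' = {}"
    proof (cases "B \<in> G")
      case True
      show ?thesis
      proof (cases "B' \<in> G")
        case True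
        then show ?thesis using Gd \<open>B \<in> G\<close> ne by auto
      next
        case False
        then have "B' \<in> M - T" using B' by auto
        then show ?thesis using mix[of B' B] \<open>B \<in> G\<close> by auto
      qed
    next
      case False
      then have b: "B \<in> M - T" using B by auto
      show ?thesis
      proof (cases "B' \<in> G")
        case True
        then show ?thesis using mix[OF b] by auto
      next
        case False
        then have "B' \<in> M" using B' by auto
        then show ?thesis using Mdisj ne b by auto
      qed
    qed
  qed
  then have "card ?N \<le> card M" using mm unfolding is_max_matching_def by auto
  moreover have "finite G" using GF finF finite_subset by blast
  moreover have "card ?N = card (M - T) + card G"
    using GM finM \<open>finite G\<close> by (intro card_Un_disjoint) auto
  moreover have "card (M - T) = card M - card T"
    using T finM finite_subset by (intro card_Diff_subset) auto
  moreover have "card T \<le> card M" using T finM card_mono by auto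
  ultimately show False using cG by linarith
qed

lemma D1A_F: "D \<in> D1A F M A \<Longrightarrow> D \<in> F"
  unfolding D1A_def D1_def by auto

lemma finD1A: "finite (D1A F M A)"
  using finF unfolding D1A_def D1_def by auto

lemma single:
  assumes D: "D \<in> D1A F M A" and A: "A \<in> M"
  shows "\<exists>u\<in>A. D \<inter> \<Union>M = {u}"
proof -
  from D have c: "card (D \<inter> \<Union>M) = 1" and ne: "D \<inter> A \<noteq> {}"
    unfolding D1A_def D1_def by auto
  from c obtain u where u: "D \<inter> \<Union>M = {u}" using card_1_singletonE by blast
  from ne obtain z where "z \<in> D" "z \<in> A" by auto
  then have "z \<in> D \<inter> \<Union>M" using A by auto
  then show ?thesis using u \<open>z \<in> A\<close> by auto
qed

lemma notinM:
  assumes D: "D \<in> D1 F M" shows "D \<notin> M"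
proof
  assume "D \<in> M"
  then have "D \<inter> \<Union>M = D" by auto
  then show False using D card3 unfolding D1_def by auto
qed

lemma swap:
  assumes A: "A \<in> M" and D: "D \<in> D1A F M A" and D': "D' \<in> D1A F M A"
    and u: "D \<inter> \<Union>M = {u}" "u \<in> A" and u': "D' \<inter> \<Union>M = {u'}" "u' \<in> A"
    and ne: "u \<noteq> u'"
  shows "D \<inter> D' \<noteq> {}"
proof
  assume dj: "D \<inter> D' = {}"
  have "D \<noteq> D'" using u u' ne by auto
  have nm: "D \<notin> M" "D' \<notin> M" using notinM D D' unfolding D1A_def by auto
  show False
  proof (rule augment[of "{A}" "{D, D'}"])
    show "{A} \<subseteq> M" using A by auto
    show "{D, D'} \<subseteq> F" using D D' D1A_F by auto
    show "\<And>g. g \<in> {D, D'} \<Longrightarrow> g \<inter> \<Union> M \<subseteq> \<Union> {A}" using u u' by auto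
    show "\<And>g g'. g \<in> {D, D'} \<Longrightarrow> g' \<in> {D, D'} \<Longrightarrow> g \<noteq> g' \<Longrightarrow> g \<inter> g' = {}"
      using dj by auto
    show "{D, D'} \<inter> M = {}" using nm by auto
    show "card {A} < card {D, D'}" using \<open>D \<noteq> D'\<close> by auto
  qed
qed

lemma Gu_card:
  assumes A: "A \<in> M" and D': "D' \<in> D1A F M A" and uD': "u \<notin> D'" and uA: "u \<in> A"
  shows "card {D\<in>D1A F M A. u \<in> D} \<le> 2"
proof -
  let ?G = "{D\<in>D1A F M A. u \<in> D}"
  obtain u' where u': "u' \<in> A" "D' \<inter> \<Union>M = {u'}" using single[OF D' A] by auto
  have uX: "u \<in> \<Union>M" using uA A by auto
  have meet: "D \<inter> D' \<noteq> {}" if D: "D \<in> ?G" for D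
  proof -
    obtain u0 where u0: "u0 \<in> A" "D \<inter> \<Union>M = {u0}" using single[of D A] D A by auto
    have "u0 = u" using u0 D uX by auto
    moreover have "u' \<noteq> u" using u' uD' by auto
    ultimately show ?thesis using swap[OF A _ D' u0(2) u0(1) u'(2) u'(1)] D by auto
  qed
  define f where "f D = (SOME w. w \<in> D \<inter> D')" for D
  have f: "f D \<in> D \<inter> D'" if "D \<in> ?G" for D
    using meet[OF that] unfolding f_def by (metis ex_in_conv someI_ex)
  have fX: "f D \<in> D' - \<Union>M" if D: "D \<in> ?G" for D
  proof -
    obtain u0 where u0: "u0 \<in> A" "D \<inter> \<Union>M = {u0}" using single[of D A] D A by auto
    have "u0 = u" using u0 D uX by auto
    then show ?thesis using f[OF D] u0 uD' by auto
  qed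
  have inj: "inj_on f ?G"
  proof (rule inj_onI)
    fix D1 D2 assume D1: "D1 \<in> ?G" and D2: "D2 \<in> ?G" and eq: "f D1 = f D2"
    have "f D1 \<noteq> u" using fX[OF D1] uX by auto
    then show "D1 = D2"
      using linear2[of D1 D2 "f D1" u] f[OF D1] f[OF D2] eq D1 D2 D1A_F by auto
  qed
  have "card ?G \<le> card (D' - \<Union>M)"
  proof (rule card_inj_on_le[OF inj])
    show "f ` ?G \<subseteq> D' - \<Union>M" using fX by blast
    show "finite (D' - \<Union>M)" using finE[OF D1A_F[OF D']] by blast
  qed
  also have "D' - \<Union>M = D' - {u'}" using u' by auto
  also have "card (D' - {u'}) = 2"
  proof -
    have "u' \<in> D'" using u' by auto
    then show ?thesis using card3[OF D1A_F[OF D']] by (simp add: card_Diff_singleton)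
  qed
  finally show ?thesis .
qed

lemma center_ex:
  assumes A: "A \<in> M1 F M"
  shows "\<exists>x\<in>A. \<forall>D\<in>D1A F M A. x \<in> D"
proof (rule ccontr)
  assume H: "\<not> ?thesis"
  have AM: "A \<in> M" and c7: "card (D1A F M A) \<ge> 7" using A unfolding M1_def d1_def by auto
  have AF: "A \<in> F" using AM MF by auto
  have "D1A F M A \<subseteq> (\<Union>u\<in>A. {D\<in>D1A F M A. u \<in> D})"
    unfolding D1A_def by auto
  then have "card (D1A F M A) \<le> card (\<Union>u\<in>A. {D\<in>D1A F M A. u \<in> D})"
    using finD1A finE[OF AF] by (intro card_mono) auto
  also have "\<dots> \<le> (\<Sum>u\<in>A. card {D\<in>D1A F M A. u \<in> D})"
    using finE[OF AF] by (rule card_UN_le)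
  also have "\<dots> \<le> (\<Sum>u\<in>A. 2)"
  proof (rule sum_mono)
    fix u assume uA: "u \<in> A"
    then obtain D' where "D' \<in> D1A F M A" "u \<notin> D'" using H by auto
    then show "card {D\<in>D1A F M A. u \<in> D} \<le> 2" using Gu_card AM uA by auto
  qed
  also have "\<dots> = 6" using card3[OF AF] by simp
  finally show False using c7 by linarith
qed

lemma center_prop:
  assumes A: "A \<in> M1 F M"
  shows "center F M A \<in> A \<and> (\<forall>D\<in>D1A F M A. center F M A \<in> D)"
proof -
  obtain x where x: "x \<in> A" "\<forall>D\<in>D1A F M A. x \<in> D" using center_ex[OF A] by auto
  have AM: "A \<in> M" and c7: "card (D1A F M A) \<ge> 7" using A unfolding M1_def d1_def by auto
  have "D1A F M A \<noteq> {}" using c7 by (metis card.empty not_numeral_le_zero)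
  then obtain D0 where D0: "D0 \<in> D1A F M A" by blast
  have "center F M A = x"
    unfolding center_def
  proof (rule the_equality)
    show "x \<in> A \<and> (\<forall>E\<in>D1A F M A. x \<in> E)" using x by auto
  next
    fix y assume y: "y \<in> A \<and> (\<forall>E\<in>D1A F M A. y \<in> E)"
    obtain u where "D0 \<inter> \<Union>M = {u}" using single[OF D0 AM] by auto
    moreover have "y \<in> D0 \<inter> \<Union>M" "x \<in> D0 \<inter> \<Union>M" using y x D0 AM by auto
    ultimately show "y = x" by auto
  qed
  then show ?thesis using x by auto
qed

lemma dX:
  assumes A: "A \<in> M1 F M" and d: "d \<in> D1A F M A"
  shows "d \<inter> \<Union>M = {center F M A}"
proof -
  have AM: "A \<in> M" using A unfolding M1_def by auto
  obtain u where u: "u \<in> A" "d \<inter> \<Union>M = {u}" using single[OF d AM] by auto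
  have "center F M A \<in> d \<inter> \<Union>M" using center_prop[OF A] d AM by auto
  then show ?thesis using u by auto
qed

lemma cardT:
  assumes EF: "E \<in> F"
  shows "card {A\<in>M. A \<inter> E \<noteq> {}} \<le> 3"
proof -
  let ?T = "{A\<in>M. A \<inter> E \<noteq> {}}"
  define g where "g A = (SOME z. z \<in> A \<inter> E)" for A
  have g: "g A \<in> A \<inter> E" if "A \<in> ?T" for A
  proof -
    have "\<exists>z. z \<in> A \<inter> E" using that by auto
    then show ?thesis unfolding g_def by (rule someI_ex)
  qed
  have "inj_on g ?T"
  proof (rule inj_onI)
    fix A A' assume A: "A \<in> ?T" and A': "A' \<in> ?T" and eq: "g A = g A'"
    show "A = A'"
    proof (rule ccontr)
      assume "A \<noteq> A'"
      then have "A \<inter> A' = {}" using Mdisj A A' by auto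
      then show False using g[OF A] g[OF A'] eq by auto
    qed
  qed
  then have "card ?T \<le> card E"
  proof (rule card_inj_on_le)
    show "g ` ?T \<subseteq> E" using g by blast
    show "finite E" using finE[OF EF] .
  qed
  then show ?thesis using card3[OF EF] by auto
qed

lemma greedy:
  assumes EF: "E \<in> F" and cE: "\<forall>A\<in>M1 F M. center F M A \<notin> E"
    and TM1: "{A\<in>M. A \<inter> E \<noteq> {}} \<subseteq> M1 F M"
    and fin: "finite S" and ST: "S \<subseteq> {A\<in>M. A \<inter> E \<noteq> {}}"
  shows "\<exists>D. (\<forall>A\<in>S. D A \<in> D1A F M A \<and> D A \<inter> E = {}) \<and>
             (\<forall>A\<in>S. \<forall>A'\<in>S. A \<noteq> A' \<longrightarrow> D A \<inter> D A' = {})"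
  using fin ST
proof (induction S rule: finite_induct)
  case empty
  then show ?case by auto
next
  case (insert A S)
  let ?T = "{A\<in>M. A \<inter> E \<noteq> {}}"
  let ?X = "\<Union>M"
  from insert obtain D where D1: "\<forall>A\<in>S. D A \<in> D1A F M A \<and> D A \<inter> E = {}"
    and D2: "\<forall>A\<in>S. \<forall>A'\<in>S. A \<noteq> A' \<longrightarrow> D A \<inter> D A' = {}" by auto
  have AT: "A \<in> ?T" using insert by auto
  then have AM1: "A \<in> M1 F M" and AM: "A \<in> M" and AE: "A \<inter> E \<noteq> {}" using TM1 by auto
  have SM1: "S \<subseteq> M1 F M" using insert TM1 by auto
  have c7: "card (D1A F M A) \<ge> 7" using AM1 unfolding M1_def d1_def by auto
  have cA: "center F M A \<in> A" using center_prop[OF AM1] by auto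
  have cAE: "center F M A \<notin> E" using cE AM1 by auto
  define W where "W = (E - ?X) \<union> (\<Union>A'\<in>S. D A' - ?X)"
  define Bad where "Bad = {d\<in>D1A F M A. d \<inter> E \<noteq> {} \<or> (\<exists>A'\<in>S. d \<inter> D A' \<noteq> {})}"
  have wit: "\<exists>w. w \<in> d \<inter> W" if d: "d \<in> Bad" for d
  proof -
    have dD: "d \<in> D1A F M A" using d unfolding Bad_def by auto
    have dx: "d \<inter> ?X = {center F M A}" using dX[OF AM1 dD] .
    show ?thesis
    proof (cases "d \<inter> E \<noteq> {}")
      case True
      then obtain z where z: "z \<in> d" "z \<in> E" by auto
      have "z \<notin> ?X"
      proof
        assume "z \<in> ?X"
        then have "z \<in> d \<inter> ?X" using z by auto
        then have "z = center F M A" using dx by auto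
        then show False using z cAE by auto
      qed
      then show ?thesis using z unfolding W_def by auto
    next
      case False
      then obtain A' z where A': "A' \<in> S" and z: "z \<in> d" "z \<in> D A'"
        using d unfolding Bad_def by auto
      have A'M1: "A' \<in> M1 F M" using A' SM1 by auto
      have "A' \<noteq> A" using A' insert by auto
      have A'M: "A' \<in> M" using A'M1 unfolding M1_def by auto
      have dA': "D A' \<in> D1A F M A'" using D1 A' by auto
      have "z \<notin> ?X"
      proof
        assume zX: "z \<in> ?X"
        then have "z = center F M A" using dx z by auto
        moreover have "z = center F M A'" using dX[OF A'M1 dA'] z zX by auto
        moreover have "center F M A' \<in> A'" using center_prop[OF A'M1] by auto
        moreover have "A \<inter> A' = {}" using Mdisj[OF AM A'M] \<open>A' \<noteq> A\<close> by auto
        ultimately show False using cA by auto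
      qed
      then show ?thesis using z A' unfolding W_def by auto
    qed
  qed
  define f where "f d = (SOME w. w \<in> d \<inter> W)" for d
  have f: "f d \<in> d \<inter> W" if "d \<in> Bad" for d
    using wit[OF that] unfolding f_def by (rule someI_ex)
  have fX: "f d \<notin> ?X" if "d \<in> Bad" for d using f[OF that] unfolding W_def by auto
  have inj: "inj_on f Bad"
  proof (rule inj_onI)
    fix d1 d2 assume d1: "d1 \<in> Bad" and d2: "d2 \<in> Bad" and eq: "f d1 = f d2"
    have D1d: "d1 \<in> D1A F M A" "d2 \<in> D1A F M A" using d1 d2 unfolding Bad_def by auto
    have "center F M A \<in> d1" "center F M A \<in> d2" using center_prop[OF AM1] D1d by auto
    moreover have "f d1 \<noteq> center F M A" using fX[OF d1] cA AM by auto
    ultimately show "d1 = d2"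
      using linear2[of d1 d2 "f d1" "center F M A"] f[OF d1] f[OF d2] eq D1d D1A_F by auto
  qed
  have finW: "finite W"
  proof -
    have "finite (D A' - ?X)" if "A' \<in> S" for A'
      using D1 that D1A_F finE by blast
    then show ?thesis unfolding W_def using finE[OF EF] insert(1) by blast
  qed
  have "card Bad \<le> card W"
  proof (rule card_inj_on_le[OF inj])
    show "f ` Bad \<subseteq> W" using f by blast
    show "finite W" using finW .
  qed
  also have "card W \<le> card (E - ?X) + card (\<Union>A'\<in>S. D A' - ?X)"
    unfolding W_def by (rule card_Un_le)
  also have "card (\<Union>A'\<in>S. D A' - ?X) \<le> (\<Sum>A'\<in>S. card (D A' - ?X))"
    using insert(1) by (rule card_UN_le)
  also have "(\<Sum>A'\<in>S. card (D A' - ?X)) \<le> (\<Sum>A'\<in>S. 2)"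
  proof (rule sum_mono)
    fix A' assume A': "A' \<in> S"
    have A'M1: "A' \<in> M1 F M" using A' SM1 by auto
    have dA': "D A' \<in> D1A F M A'" using D1 A' by auto
    have "D A' - ?X = D A' - {center F M A'}" using dX[OF A'M1 dA'] by auto
    also have "card \<dots> = 2"
    proof -
      have "center F M A' \<in> D A'" using dX[OF A'M1 dA'] by auto
      then show ?thesis using card3[OF D1A_F[OF dA']] by (simp add: card_Diff_singleton)
    qed
    finally show "card (D A' - ?X) \<le> 2" by simp
  qed
  also have "(\<Sum>A'\<in>S. (2::nat)) = 2 * card S" by simp
  finally have cB: "card Bad \<le> card (E - ?X) + 2 * card S" by simp
  have "card (E - ?X) < card E"
  proof (rule psubset_card_mono)
    show "finite E" using finE[OF EF] .
    show "E - ?X \<subset> E" using AE AM by blast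
  qed
  then have cEX: "card (E - ?X) \<le> 2" using card3[OF EF] by simp
  have "card (insert A S) \<le> card ?T"
    using insert(4) finM by (intro card_mono) auto
  then have "card S \<le> 2" using cardT[OF EF] insert(1,2) by simp
  then have "card Bad \<le> 6" using cB cEX by linarith
  have "\<not> D1A F M A \<subseteq> Bad"
  proof
    assume "D1A F M A \<subseteq> Bad"
    then have "card (D1A F M A) \<le> card Bad"
      using finD1A unfolding Bad_def by (intro card_mono) auto
    then show False using c7 \<open>card Bad \<le> 6\<close> by linarith
  qed
  then obtain d where d: "d \<in> D1A F M A" "d \<notin> Bad" by auto
  then have dE: "d \<inter> E = {}" and dS: "\<forall>A'\<in>S. d \<inter> D A' = {}" unfolding Bad_def by auto
  let ?D = "D(A := d)"
  show ?case
  proof (rule exI[of _ ?D], intro conjI ballI impI)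
    fix B assume "B \<in> insert A S"
    then show "?D B \<in> D1A F M B" using D1 d by auto
  next
    fix B assume "B \<in> insert A S"
    then show "?D B \<inter> E = {}" using D1 dE by auto
  next
    fix B B' assume B: "B \<in> insert A S" and B': "B' \<in> insert A S" and ne: "B \<noteq> B'"
    show "?D B \<inter> ?D B' = {}"
    proof (cases "B = A")
      case True
      then have "B' \<in> S" using B' ne by auto
      then show ?thesis using True dS ne by auto
    next
      case False
      then have Bs: "B \<in> S" using B by auto
      show ?thesis
      proof (cases "B' = A")
        case True
        then show ?thesis using Bs dS False by auto
      next
        case False
        then have "B' \<in> S" using B' by auto
        then show ?thesis using Bs D2 ne \<open>B \<noteq> A\<close> False by auto
      qed
    qed
  qed
qed

end

theorem proposition7:
  fixes F M :: "'a set set"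
  assumes "finite F"
    and "uniform3 F"
    and "linear_family F"
    and "S_fam F = {}"
    and "is_max_matching F M"
  shows "E2 F M = {}"
proof (rule ccontr)
  assume "E2 F M \<noteq> {}"
  then obtain E where E: "E \<in> E2 F M" by auto
  interpret setting F M using assms by (unfold_locales) auto
  have EF: "E \<in> F" and EM2: "\<forall>B\<in>M2 F M. E \<inter> B = {}" and EE1: "E \<notin> E1 F M"
    using E unfolding E2_def by auto
  have cE: "\<forall>A\<in>M1 F M. center F M A \<notin> E"
    using EE1 EF unfolding E1_def star_def by auto
  let ?T = "{A\<in>M. A \<inter> E \<noteq> {}}"
  let ?X = "\<Union>M"
  have TM1: "?T \<subseteq> M1 F M"
  proof
    fix A assume A: "A \<in> ?T"
    show "A \<in> M1 F M"
    proof (rule ccontr)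
      assume "A \<notin> M1 F M"
      then have "A \<in> M2 F M" using A unfolding M2_def by auto
      then show False using EM2 A by auto
    qed
  qed
  have Ene: "E \<noteq> {}" using card3[OF EF] by auto
  have EnM: "E \<notin> M"
  proof
    assume "E \<in> M"
    then have "E \<in> ?T" using Ene by auto
    then have "E \<in> M1 F M" using TM1 by auto
    then have "center F M E \<in> E" using center_prop by auto
    then show False using cE \<open>E \<in> M1 F M\<close> by auto
  qed
  have finT: "finite ?T" using finM by auto
  obtain D where D1: "\<forall>A\<in>?T. D A \<in> D1A F M A \<and> D A \<inter> E = {}"
    and D2: "\<forall>A\<in>?T. \<forall>A'\<in>?T. A \<noteq> A' \<longrightarrow> D A \<inter> D A' = {}"
    using greedy[OF EF cE TM1 finT] by blast
  have DX: "D A \<inter> ?X = {center F M A}" if "A \<in> ?T" for A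
    using dX[of A "D A"] that TM1 D1 by auto
  have cD: "center F M A \<in> D A" if "A \<in> ?T" for A using DX[OF that] by auto
  have injD: "inj_on D ?T"
  proof (rule inj_onI)
    fix A A' assume A: "A \<in> ?T" and A': "A' \<in> ?T" and eq: "D A = D A'"
    show "A = A'"
    proof (rule ccontr)
      assume "A \<noteq> A'"
      then have "D A \<inter> D A' = {}" using D2 A A' by auto
      then show False using eq cD[OF A] by auto
    qed
  qed
  show False
  proof (rule augment[of ?T "insert E (D ` ?T)"])
    show "?T \<subseteq> M" by auto
    show "insert E (D ` ?T) \<subseteq> F" using EF D1 D1A_F by auto
  next
    fix g assume g: "g \<in> insert E (D ` ?T)"
    show "g \<inter> ?X \<subseteq> \<Union>?T"
    proof (cases "g = E")
      case True
      show ?thesis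
      proof
        fix x assume "x \<in> g \<inter> ?X"
        then obtain B where "B \<in> M" "x \<in> B" "x \<in> E" using True by auto
        then show "x \<in> \<Union>?T" by auto
      qed
    next
      case False
      then obtain A where A: "A \<in> ?T" "g = D A" using g by auto
      have "center F M A \<in> A" using center_prop TM1 A(1) by auto
      then show ?thesis using DX[OF A(1)] A by auto
    qed
  next
    fix g g' assume g: "g \<in> insert E (D ` ?T)" and g': "g' \<in> insert E (D ` ?T)"
      and ne: "g \<noteq> g'"
    show "g \<inter> g' = {}"
    proof (cases "g = E")
      case True
      then obtain A where "A \<in> ?T" "g' = D A" using g' ne by auto
      then show ?thesis using D1 True by auto
    next
      case False
      then obtain A where A: "A \<in> ?T" "g = D A" using g by auto
      show ?thesis
      proof (cases "g' = E")
        case True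
        then show ?thesis using D1 A by auto
      next
        case False
        then obtain A' where A': "A' \<in> ?T" "g' = D A'" using g' by auto
        then have "A \<noteq> A'" using ne A by auto
        then show ?thesis using D2 A A' by auto
      qed
    qed
  next
    show "insert E (D ` ?T) \<inter> M = {}"
    proof -
      have "D A \<notin> M" if "A \<in> ?T" for A
        using notinM[of "D A"] D1 that unfolding D1A_def by auto
      then show ?thesis using EnM by auto
    qed
  next
    have "E \<notin> D ` ?T"
    proof
      assume "E \<in> D ` ?T"
      then obtain A where A: "A \<in> ?T" "E = D A" by auto
      then have "center F M A \<in> E" using cD by auto
      then show False using cE TM1 A(1) by auto
    qed
    then have "card (insert E (D ` ?T)) = card (D ` ?T) + 1"
      using finT by simp
    also have "card (D ` ?T) = card ?T" using card_image[OF injD] .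
    finally show "card ?T < card (insert E (D ` ?T))" by simp
  qed
qed

end
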